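(* In the setting below: (i) $C_0$ is a unital $K$-subalgebra of $C$ with identity element $w=\sum_{e\in G_0}\big(\sum_{f\in G_0}1_f\#\sum_{h\in T_f\cap S_e}v_h\big)\delta_e$. (ii) The elements $w_e:=\big(\sum_{f\in G_0}1_f\#\sum_{h\in T_f\cap S_e}v_h\big)\delta_e$, $e\in G_0$, are central orthogonal idempotents of $C_0$ whose sum is $w$. (iii) $C_0=\bigoplus_{e\in G_0}C_e$, where $C_e:=C_0w_e=\bigoplus_{g\in G_e}\Big(\bigoplus_{l,k:\ r(l)=d(l)=r(k),\ d(k)=e}A_l\#v_k\Big)\delta_g$ is an ideal of $C_0$ which is a unital algebra with identity $w_e$.
   Context: Groupoid conventions. A groupoid is a small category with all morphisms invertible, regarded as the set $G$ of morphisms. For $g\in G$ we have $d(g)=g^{-1}g$ and $r(g)=gg^{-1}$. The product $gh$ is defined iff $d(g)=r(h)$, and then $d(gh)=d(h)$, $r(gh)=r(g)$. $G^2=\{(g,h):d(g)=r(h)\}$, and $G_0$ is the set of identities. For $e\in G_0$: - $G_e=\{g:d(g)=r(g)=e\}$; - $S_e=\{g: d(g)=e\}$; - $T_e=\{g: r(g)=e\}$. Actions. An action of $G$ on a ring $R$ is a pair $\beta=(\{E_g\},\{\beta_g\})$ where each $E_g=E_{r(g)}$ is an ideal of $R$, each $\beta_g:E_{g^{-1}}\to E_g$ is a ring isomorphism, $\beta_e=\mathrm{id}$ for $e\in G_0$, and $\beta_g\beta_h=\beta_{gh}$ on $E_{h^{-1}}$ for $(g,h)\in G^2$. The skew groupoid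 ring is $R\star_\beta G=\bigoplus_g E_g\delta_g$ with $(x\delta_g)(y\delta_h)=x\beta_g(y)\delta_{gh}$ if $(g,h)\in G^2$ and $0$ otherwise. $KG^*$. The free $K$-module with basis $\{v_g\}$, with $v_gv_h=\delta_{g,h}v_g$. Setting. $K$ is a commutative unital ring and $G$ is a finite groupoid. $A=\bigoplus_{g\in G}A_g$ is a unital $G$-graded $K$-algebra ($A_gA_h\subseteq A_{gh}$ if $(g,h)\in G^2$, and $0$ otherwise). Known facts: $1_A=\sum_{e\in G_0}1_e$ with $1_e\in A_e$ an identity element of $A_e$ (possibly $0$), and $1_ea=a$ for $a\in A_g$ with $r(g)=e$, $a1_e=a$ for $a\in A_g$ with $d(g)=e$. $KG^*$ acts on $A$ by $v_h\cdot a=a_h$ (the $h$-component). $B=A\#KG^*=A\otimes_K KG^*$ with $(a\#v_g)(b\#v_h)=a(v_{gh^{-1}}\cdot b)\#v_h$ if $d(g)=d(h)$, and $0$ otherwise. $G$ acts on $B$ by $\beta=(\{E_g\},\{\beta_g\})$ with $E_g=\bigoplus_{l,k\in G,\ d(k)=r(g)}A_l\#v_k$ and $\beta_g(a_l\#v_k)=a_l\#v_{kg^{-1}}$. Let $C=B\star_\beta G$, and $$C_0=\bigoplus_{e\in G_0}\bigoplus_{g\in G_e}\Big(\bigoplus_{l,k\in G:\ r(l)=d(l)=r(k),\ d(k)=e}A_l\#v_k\Big)\delta_g.$$ *)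

theory Defs
  imports Complex_Main "HOL-Library.Function_Algebras"
begin

text \<open>A groupoid is a set G of morphisms with a partial product pr (only meaningful
  when d g = r h) and an inversion iv; d g = g^{-1} g, r g = g g^{-1}.\<close>

definition gd :: "('g \<Rightarrow> 'g \<Rightarrow> 'g) \<Rightarrow> ('g \<Rightarrow> 'g) \<Rightarrow> 'g \<Rightarrow> 'g" where
  "gd pr iv g = pr (iv g) g"

definition gr :: "('g \<Rightarrow> 'g \<Rightarrow> 'g) \<Rightarrow> ('g \<Rightarrow> 'g) \<Rightarrow> 'g \<Rightarrow> 'g" where
  "gr pr iv g = pr g (iv g)"

definition groupoid :: "'g set \<Rightarrow> ('g \<Rightarrow> 'g \<Rightarrow> 'g) \<Rightarrow> ('g \<Rightarrow> 'g) \<Rightarrow> bool" where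
  "groupoid G pr iv \<longleftrightarrow>
     (\<forall>g\<in>G. iv g \<in> G) \<and>
     (\<forall>g\<in>G. gd pr iv (iv g) = gr pr iv g \<and> gr pr iv (iv g) = gd pr iv g) \<and>
     (\<forall>g\<in>G. \<forall>h\<in>G. gd pr iv g = gr pr iv h \<longrightarrow>
        pr g h \<in> G \<and> gd pr iv (pr g h) = gd pr iv h \<and> gr pr iv (pr g h) = gr pr iv g) \<and>
     (\<forall>g\<in>G. \<forall>h\<in>G. \<forall>k\<in>G. gd pr iv g = gr pr iv h \<and> gd pr iv h = gr pr iv k \<longrightarrow>
        pr (pr g h) k = pr g (pr h k)) \<and>
     (\<forall>g\<in>G. pr (gr pr iv g) g = g \<and> pr g (gd pr iv g) = g)"

definition G0 :: "'g set \<Rightarrow> ('g \<Rightarrow> 'g \<Rightarrow> 'g) \<Rightarrow> ('g \<Rightarrow> 'g) \<Rightarrow> 'g set" where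
  "G0 G pr iv = gd pr iv ` G"

definition K_algebra :: "('k::comm_ring_1 \<Rightarrow> 'a::ring_1 \<Rightarrow> 'a) \<Rightarrow> bool" where
  "K_algebra scale \<longleftrightarrow> module scale \<and>
     (\<forall>t a b. scale t (a * b) = scale t a * b \<and> scale t (a * b) = a * scale t b)"

definition graded_algebra ::
  "('k::comm_ring_1 \<Rightarrow> 'a::ring_1 \<Rightarrow> 'a) \<Rightarrow> 'g set \<Rightarrow> ('g \<Rightarrow> 'g \<Rightarrow> 'g) \<Rightarrow> ('g \<Rightarrow> 'g)
     \<Rightarrow> ('g \<Rightarrow> 'a set) \<Rightarrow> bool" where
  "graded_algebra scale G pr iv Ag \<longleftrightarrow>
     (\<forall>g\<in>G. module.subspace scale (Ag g)) \<and>
     (\<forall>a. \<exists>!x. (\<forall>g. g \<notin> G \<longrightarrow> x g = 0) \<and> (\<forall>g\<in>G. x g \<in> Ag g) \<and> a = (\<Sum>g\<in>G. x g)) \<and>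
     (\<forall>g\<in>G. \<forall>h\<in>G. \<forall>a\<in>Ag g. \<forall>b\<in>Ag h.
        (gd pr iv g = gr pr iv h \<longrightarrow> a * b \<in> Ag (pr g h)) \<and>
        (gd pr iv g \<noteq> gr pr iv h \<longrightarrow> a * b = 0))"

text \<open>The homogeneous component a_h = v_h . a.\<close>
definition gcomp :: "'g set \<Rightarrow> ('g \<Rightarrow> 'a::ring_1 set) \<Rightarrow> 'g \<Rightarrow> 'a \<Rightarrow> 'a" where
  "gcomp G Ag h a =
     (THE x. (\<forall>g. g \<notin> G \<longrightarrow> x g = 0) \<and> (\<forall>g\<in>G. x g \<in> Ag g) \<and> a = (\<Sum>g\<in>G. x g)) h"

text \<open>Since KG^* is free on {v_k : k in G} (G finite), an element sum_k a_k # v_k of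
  B = A (x)_K KG^* is represented by the function k \<mapsto> a_k (zero outside G).
  An element sum_g b_g delta_g of C is represented by g \<mapsto> b_g, i.e. by
  c :: 'g \<Rightarrow> 'g \<Rightarrow> 'a with c g k the A-coefficient of (_ # v_k) delta_g.\<close>

definition B_mult :: "'g set \<Rightarrow> ('g \<Rightarrow> 'g \<Rightarrow> 'g) \<Rightarrow> ('g \<Rightarrow> 'g) \<Rightarrow> ('g \<Rightarrow> 'a::ring_1 set)
    \<Rightarrow> ('g \<Rightarrow> 'a) \<Rightarrow> ('g \<Rightarrow> 'a) \<Rightarrow> ('g \<Rightarrow> 'a)" where
  "B_mult G pr iv Ag x y = (\<lambda>h. if h \<in> G then
      (\<Sum>g\<in>{g\<in>G. gd pr iv g = gd pr iv h}. x g * gcomp G Ag (pr g (iv h)) (y h)) else 0)"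

text \<open>beta_g (a # v_k) = a # v_{k g^{-1}}, on E_{g^{-1}}.\<close>
definition beta :: "'g set \<Rightarrow> ('g \<Rightarrow> 'g \<Rightarrow> 'g) \<Rightarrow> ('g \<Rightarrow> 'g) \<Rightarrow> 'g \<Rightarrow> ('g \<Rightarrow> 'a::zero) \<Rightarrow> ('g \<Rightarrow> 'a)" where
  "beta G pr iv g y = (\<lambda>k. if k \<in> G \<and> gd pr iv k = gr pr iv g then y (pr k g) else 0)"

definition Cset :: "'g set \<Rightarrow> ('g \<Rightarrow> 'g \<Rightarrow> 'g) \<Rightarrow> ('g \<Rightarrow> 'g) \<Rightarrow> ('g \<Rightarrow> 'g \<Rightarrow> 'a::zero) set" where
  "Cset G pr iv = {c. \<forall>g k. c g k \<noteq> 0 \<longrightarrow> g \<in> G \<and> k \<in> G \<and> gd pr iv k = gr pr iv g}"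

text \<open>(x delta_g)(y delta_h) = x beta_g(y) delta_{gh} if d g = r h, 0 otherwise.\<close>
definition C_mult :: "'g set \<Rightarrow> ('g \<Rightarrow> 'g \<Rightarrow> 'g) \<Rightarrow> ('g \<Rightarrow> 'g) \<Rightarrow> ('g \<Rightarrow> 'a::ring_1 set)
    \<Rightarrow> ('g \<Rightarrow> 'g \<Rightarrow> 'a) \<Rightarrow> ('g \<Rightarrow> 'g \<Rightarrow> 'a) \<Rightarrow> ('g \<Rightarrow> 'g \<Rightarrow> 'a)" where
  "C_mult G pr iv Ag c c' = (\<lambda>m.
     \<Sum>(g, h)\<in>{(g, h). g \<in> G \<and> h \<in> G \<and> gd pr iv g = gr pr iv h \<and> pr g h = m}.
        B_mult G pr iv Ag (c g) (beta G pr iv g (c' h)))"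

definition C_scale :: "('k \<Rightarrow> 'a \<Rightarrow> 'a) \<Rightarrow> 'k \<Rightarrow> ('g \<Rightarrow> 'g \<Rightarrow> 'a) \<Rightarrow> ('g \<Rightarrow> 'g \<Rightarrow> 'a)" where
  "C_scale scale t c = (\<lambda>g k. scale t (c g k))"

text \<open>C_0 = (+)_{e in G_0} (+)_{g in G_e} ((+)_{l,k: r l = d l = r k, d k = e} A_l # v_k) delta_g.\<close>
definition C0set :: "'g set \<Rightarrow> ('g \<Rightarrow> 'g \<Rightarrow> 'g) \<Rightarrow> ('g \<Rightarrow> 'g) \<Rightarrow> ('g \<Rightarrow> 'a::ring_1 set)
    \<Rightarrow> ('g \<Rightarrow> 'g \<Rightarrow> 'a) set" where
  "C0set G pr iv Ag = {c.
     (\<forall>g k. c g k \<noteq> 0 \<longrightarrow> g \<in> G \<and> gd pr iv g = gr pr iv g \<and> k \<in> G \<and> gd pr iv k = gd pr iv g) \<and>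
     (\<forall>g k l. l \<in> G \<and> gcomp G Ag l (c g k) \<noteq> 0 \<longrightarrow>
        gr pr iv l = gd pr iv l \<and> gd pr iv l = gr pr iv k)}"

definition Ce_explicit :: "'g set \<Rightarrow> ('g \<Rightarrow> 'g \<Rightarrow> 'g) \<Rightarrow> ('g \<Rightarrow> 'g) \<Rightarrow> ('g \<Rightarrow> 'a::ring_1 set)
    \<Rightarrow> 'g \<Rightarrow> ('g \<Rightarrow> 'g \<Rightarrow> 'a) set" where
  "Ce_explicit G pr iv Ag e = {c.
     (\<forall>g k. c g k \<noteq> 0 \<longrightarrow> g \<in> G \<and> gd pr iv g = e \<and> gr pr iv g = e \<and> k \<in> G \<and> gd pr iv k = e) \<and>
     (\<forall>g k l. l \<in> G \<and> gcomp G Ag l (c g k) \<noteq> 0 \<longrightarrow>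
        gr pr iv l = gd pr iv l \<and> gd pr iv l = gr pr iv k)}"

definition one_at :: "'g set \<Rightarrow> ('g \<Rightarrow> 'a::ring_1 set) \<Rightarrow> 'g \<Rightarrow> 'a" where
  "one_at G Ag f = gcomp G Ag f 1"

definition w_e :: "'g set \<Rightarrow> ('g \<Rightarrow> 'g \<Rightarrow> 'g) \<Rightarrow> ('g \<Rightarrow> 'g) \<Rightarrow> ('g \<Rightarrow> 'a::ring_1 set)
    \<Rightarrow> 'g \<Rightarrow> ('g \<Rightarrow> 'g \<Rightarrow> 'a)" where
  "w_e G pr iv Ag e = (\<lambda>g k. if g = e \<and> k \<in> G then
      (\<Sum>f\<in>G0 G pr iv. if gr pr iv k = f \<and> gd pr iv k = e then one_at G Ag f else 0) else 0)"

definition w_tot :: "'g set \<Rightarrow> ('g \<Rightarrow> 'g \<Rightarrow> 'g) \<Rightarrow> ('g \<Rightarrow> 'g) \<Rightarrow> ('g \<Rightarrow> 'a::ring_1 set)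
    \<Rightarrow> ('g \<Rightarrow> 'g \<Rightarrow> 'a)" where
  "w_tot G pr iv Ag = (\<Sum>e\<in>G0 G pr iv. w_e G pr iv Ag e)"

definition Ce :: "'g set \<Rightarrow> ('g \<Rightarrow> 'g \<Rightarrow> 'g) \<Rightarrow> ('g \<Rightarrow> 'g) \<Rightarrow> ('g \<Rightarrow> 'a::ring_1 set)
    \<Rightarrow> 'g \<Rightarrow> ('g \<Rightarrow> 'g \<Rightarrow> 'a) set" where
  "Ce G pr iv Ag e = (\<lambda>c. C_mult G pr iv Ag c (w_e G pr iv Ag e)) ` C0set G pr iv Ag"

end

theory Submission
  imports Defs
begin


lemma sum_fun_apply: "(sum f A) x = sum (\<lambda>a. f a x) A"
  by (induct A rule: infinite_finite_induct) auto

lemma sum_single: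
  assumes "finite A" "\<And>x. x \<in> A \<Longrightarrow> x \<noteq> a \<Longrightarrow> f x = 0"
  shows "sum f A = (if a \<in> A then f a else 0)"
proof (cases "a \<in> A")
  case True
  then show ?thesis using assms by (simp add: sum.remove)
next
  case False
  then show ?thesis using assms by (metis sum.neutral)
qed

locale grp =
  fixes G :: "'g set" and pr :: "'g \<Rightarrow> 'g \<Rightarrow> 'g" and iv :: "'g \<Rightarrow> 'g"
  assumes grpd: "groupoid G pr iv"
begin

abbreviation "d \<equiv> gd pr iv"
abbreviation "r \<equiv> gr pr iv"

lemma iv_in: "g \<in> G \<Longrightarrow> iv g \<in> G" using grpd unfolding groupoid_def by blast
lemma d_iv: "g \<in> G \<Longrightarrow> d (iv g) = r g" using grpd unfolding groupoid_def by blast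
lemma r_iv: "g \<in> G \<Longrightarrow> r (iv g) = d g" using grpd unfolding groupoid_def by blast
lemma mult: "g \<in> G \<Longrightarrow> h \<in> G \<Longrightarrow> d g = r h \<Longrightarrow> pr g h \<in> G \<and> d (pr g h) = d h \<and> r (pr g h) = r g"
  using grpd unfolding groupoid_def by blast
lemma assoc: "g \<in> G \<Longrightarrow> h \<in> G \<Longrightarrow> k \<in> G \<Longrightarrow> d g = r h \<Longrightarrow> d h = r k \<Longrightarrow> pr (pr g h) k = pr g (pr h k)"
  using grpd unfolding groupoid_def by blast
lemma unit_l: "g \<in> G \<Longrightarrow> pr (r g) g = g" using grpd unfolding groupoid_def by blast
lemma unit_r: "g \<in> G \<Longrightarrow> pr g (d g) = g" using grpd unfolding groupoid_def by blast
lemma d_def': "pr (iv g) g = d g" by (simp add: gd_def)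
lemma r_def': "pr g (iv g) = r g" by (simp add: gr_def)

lemma d_in: "g \<in> G \<Longrightarrow> d g \<in> G" using mult[of "iv g" g] iv_in d_iv d_def' by metis
lemma r_in: "g \<in> G \<Longrightarrow> r g \<in> G" using mult[of g "iv g"] iv_in r_iv r_def' by metis
lemma d_d: "g \<in> G \<Longrightarrow> d (d g) = d g" using mult[of "iv g" g] iv_in d_iv d_def' by metis
lemma r_d: "g \<in> G \<Longrightarrow> r (d g) = d g" using mult[of "iv g" g] iv_in d_iv r_iv d_def' by metis
lemma d_r: "g \<in> G \<Longrightarrow> d (r g) = r g" using mult[of g "iv g"] iv_in d_iv r_iv r_def' by metis
lemma r_r: "g \<in> G \<Longrightarrow> r (r g) = r g" using mult[of g "iv g"] iv_in r_iv r_def' by metis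

lemma cancel_l:
  assumes "g \<in> G" "h \<in> G" "h' \<in> G" "d g = r h" "d g = r h'" "pr g h = pr g h'"
  shows "h = h'"
proof -
  have "pr (iv g) (pr g h) = h"
    using assoc[of "iv g" g h] assms iv_in d_iv d_def' unit_l by metis
  moreover have "pr (iv g) (pr g h') = h'"
    using assoc[of "iv g" g h'] assms iv_in d_iv d_def' unit_l by metis
  ultimately show ?thesis using assms by metis
qed

lemma cancel_r:
  assumes "g \<in> G" "g' \<in> G" "h \<in> G" "d g = r h" "d g' = r h" "pr g h = pr g' h"
  shows "g = g'"
proof -
  have "pr (pr g h) (iv h) = g"
    using assoc[of g h "iv h"] assms iv_in r_iv r_def' unit_r by metis
  moreover have "pr (pr g' h) (iv h) = g'"
    using assoc[of g' h "iv h"] assms iv_in r_iv r_def' unit_r by metis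
  ultimately show ?thesis using assms by metis
qed

lemma G0_iff: "e \<in> G0 G pr iv \<longleftrightarrow> e \<in> G \<and> d e = e"
proof
  assume "e \<in> G0 G pr iv"
  then obtain g where "g \<in> G" "e = d g" unfolding G0_def by blast
  then show "e \<in> G \<and> d e = e" using d_in d_d by simp
next
  assume "e \<in> G \<and> d e = e"
  then show "e \<in> G0 G pr iv" unfolding G0_def by (metis image_eqI)
qed
lemma G0_r: "e \<in> G0 G pr iv \<Longrightarrow> r e = e" using G0_iff r_d by metis

end



locale setting = grp G pr iv for G :: "'g set" and pr iv +
  fixes Ag :: "'g \<Rightarrow> 'a::ring_1 set" and scale :: "'k::comm_ring_1 \<Rightarrow> 'a \<Rightarrow> 'a"
  assumes fin: "finite G" and kalg: "K_algebra scale"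
    and gra: "graded_algebra scale G pr iv Ag"
begin

abbreviation "gc \<equiv> gcomp G Ag"
abbreviation "on \<equiv> one_at G Ag"

lemma md: "module scale" using kalg unfolding K_algebra_def by blast
lemma sub: "g \<in> G \<Longrightarrow> module.subspace scale (Ag g)"
  using gra unfolding graded_algebra_def by blast
lemma Ag0: "g \<in> G \<Longrightarrow> 0 \<in> Ag g" using sub module.subspace_0[OF md] by blast
lemma Ag_add: "g \<in> G \<Longrightarrow> x \<in> Ag g \<Longrightarrow> y \<in> Ag g \<Longrightarrow> x + y \<in> Ag g"
  using sub module.subspace_add[OF md] by blast
lemma Ag_neg: "g \<in> G \<Longrightarrow> x \<in> Ag g \<Longrightarrow> - x \<in> Ag g"
  using sub module.subspace_neg[OF md] by blast
lemma Ag_scale: "g \<in> G \<Longrightarrow> x \<in> Ag g \<Longrightarrow> scale t x \<in> Ag g"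
  using sub module.subspace_scale[OF md] by blast
lemma Ag_sum: "g \<in> G \<Longrightarrow> (\<And>i. i \<in> I \<Longrightarrow> f i \<in> Ag g) \<Longrightarrow> sum f I \<in> Ag g"
  using sub module.subspace_sum[OF md] by blast
lemma Ag_mult: "g \<in> G \<Longrightarrow> h \<in> G \<Longrightarrow> a \<in> Ag g \<Longrightarrow> b \<in> Ag h \<Longrightarrow> d g = r h \<Longrightarrow> a * b \<in> Ag (pr g h)"
  using gra unfolding graded_algebra_def by blast
lemma Ag_mult0: "g \<in> G \<Longrightarrow> h \<in> G \<Longrightarrow> a \<in> Ag g \<Longrightarrow> b \<in> Ag h \<Longrightarrow> d g \<noteq> r h \<Longrightarrow> a * b = 0"
  using gra unfolding graded_algebra_def by blast

definition "DP a x \<longleftrightarrow> (\<forall>g. g \<notin> G \<longrightarrow> x g = 0) \<and> (\<forall>g\<in>G. x g \<in> Ag g) \<and> a = (\<Sum>g\<in>G. x g)"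

lemma ex1: "\<exists>!x. DP a x" using gra unfolding graded_algebra_def DP_def by blast

lemma gc_DP: "DP a (\<lambda>h. gc h a)"
proof -
  have "gc = (\<lambda>h a. (THE x. DP a x) h)" unfolding gcomp_def DP_def by simp
  then show ?thesis using theI'[OF ex1[of a]] by simp
qed

lemma gc_out: "g \<notin> G \<Longrightarrow> gc g a = 0" using gc_DP unfolding DP_def by blast
lemma gc_in: "g \<in> G \<Longrightarrow> gc g a \<in> Ag g" using gc_DP unfolding DP_def by blast
lemma gc_sum: "a = (\<Sum>g\<in>G. gc g a)" using gc_DP unfolding DP_def by blast

lemma gc_unique: assumes "DP a x" shows "gc h a = x h"
proof -
  have "(\<lambda>h. gc h a) = x" using ex1[of a] gc_DP assms by blast
  then show ?thesis by metis
qed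

lemma gc_homog: assumes "h \<in> G" "a \<in> Ag h" shows "gc g a = (if g = h then a else 0)"
proof -
  have "DP a (\<lambda>g. if g = h then a else 0)"
    unfolding DP_def using assms Ag0 fin by (auto simp: sum.delta')
  then show ?thesis by (rule gc_unique)
qed

lemma gc_zero[simp]: "gc g 0 = 0"
proof -
  have "DP 0 (\<lambda>g. 0)" unfolding DP_def using Ag0 by auto
  then show ?thesis by (rule gc_unique)
qed

lemma gc_add: "gc g (a + b) = gc g a + gc g b"
proof -
  have "DP (a + b) (\<lambda>g. gc g a + gc g b)"
    unfolding DP_def using gc_out gc_in Ag_add gc_sum[of a] gc_sum[of b]
    by (auto simp: sum.distrib)
  then show ?thesis by (rule gc_unique)
qed

lemma gc_neg: "gc g (- a) = - gc g a"
proof -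
  have "DP (- a) (\<lambda>g. - gc g a)"
    unfolding DP_def using gc_out gc_in Ag_neg gc_sum[of a]
    by (auto simp: sum_negf)
  then show ?thesis by (rule gc_unique)
qed

lemma gc_scale: "gc g (scale t a) = scale t (gc g a)"
proof -
  have "DP (scale t a) (\<lambda>g. scale t (gc g a))"
    unfolding DP_def using gc_out gc_in Ag_scale gc_sum[of a]
      module.scale_zero_right[OF md] module.scale_sum_right[OF md]
    by metis
  then show ?thesis by (rule gc_unique)
qed

lemma gc_sumI: "gc g (sum f I) = (\<Sum>i\<in>I. gc g (f i))"
  by (induct I rule: infinite_finite_induct) (auto simp: gc_add)

lemma gc_sum_homog:
  assumes "finite I" "\<And>i. i \<in> I \<Longrightarrow> b i = 0 \<or> (\<phi> i \<in> G \<and> b i \<in> Ag (\<phi> i))"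
  shows "gc m (sum b I) = (\<Sum>i\<in>I. if \<phi> i = m then b i else 0)"
  unfolding gc_sumI
proof (rule sum.cong[OF refl])
  fix i assume "i \<in> I"
  then show "gc m (b i) = (if \<phi> i = m then b i else 0)"
    using assms(2)[of i] gc_homog by auto
qed

end



context setting begin

lemma one_sum: "1 = (\<Sum>g\<in>G. on g)" unfolding one_at_def using gc_sum by blast
lemma on_in: "g \<in> G \<Longrightarrow> on g \<in> Ag g" unfolding one_at_def using gc_in by blast

lemma mult_homog: "g \<in> G \<Longrightarrow> h \<in> G \<Longrightarrow> a \<in> Ag g \<Longrightarrow> b \<in> Ag h \<Longrightarrow>
   a * b = 0 \<or> (pr g h \<in> G \<and> a * b \<in> Ag (pr g h))"
  using Ag_mult Ag_mult0 mult by blast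

lemma U1: assumes h: "h \<in> G" "a \<in> Ag h" shows "on (r h) * a = a"
proof -
  have "a = (\<Sum>g\<in>G. on g * a)" by (metis one_sum mult_1 sum_distrib_right)
  then have "gc h a = gc h (\<Sum>g\<in>G. on g * a)" by simp
  also have "\<dots> = (\<Sum>g\<in>G. if pr g h = h then on g * a else 0)"
    by (rule gc_sum_homog[OF fin]) (use mult_homog on_in h in blast)
  also have "\<dots> = (\<Sum>g\<in>G. if g = r h then on g * a else 0)"
  proof (rule sum.cong[OF refl])
    fix g assume g: "g \<in> G"
    show "(if pr g h = h then on g * a else 0) = (if g = r h then on g * a else 0)"
    proof (cases "d g = r h")
      case True
      have "pr g h = h \<longleftrightarrow> g = r h"
        using cancel_r[of g "r h" h] True g h unit_l[OF h(1)] r_in[OF h(1)] d_r[OF h(1)] by auto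
      then show ?thesis by simp
    next
      case False
      then have "on g * a = 0" using Ag_mult0[OF g h(1) on_in[OF g] h(2)] by blast
      then show ?thesis using False d_r[OF h(1)] by auto
    qed
  qed
  also have "\<dots> = on (r h) * a" using r_in[OF h(1)] fin by (simp add: sum.delta')
  finally show ?thesis using gc_homog h by simp
qed

lemma U2: assumes h: "h \<in> G" "a \<in> Ag h" shows "a * on (d h) = a"
proof -
  have "a = (\<Sum>g\<in>G. a * on g)" by (metis one_sum mult_1_right sum_distrib_left)
  then have "gc h a = gc h (\<Sum>g\<in>G. a * on g)" by simp
  also have "\<dots> = (\<Sum>g\<in>G. if pr h g = h then a * on g else 0)"
    by (rule gc_sum_homog[OF fin]) (use mult_homog on_in h in blast)
  also have "\<dots> = (\<Sum>g\<in>G. if g = d h then a * on g else 0)"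
  proof (rule sum.cong[OF refl])
    fix g assume g: "g \<in> G"
    show "(if pr h g = h then a * on g else 0) = (if g = d h then a * on g else 0)"
    proof (cases "d h = r g")
      case True
      have "pr h g = h \<longleftrightarrow> g = d h"
        using cancel_l[of h g "d h"] True g h unit_r[OF h(1)] d_in[OF h(1)] r_d[OF h(1)] by auto
      then show ?thesis by simp
    next
      case False
      then have "a * on g = 0" using Ag_mult0[OF h(1) g h(2) on_in[OF g]] by blast
      then show ?thesis using False g h r_d by auto
    qed
  qed
  also have "\<dots> = a * on (d h)" using d_in[OF h(1)] fin by (simp add: sum.delta')
  finally show ?thesis using gc_homog h by simp
qed

definition "spt P a \<longleftrightarrow> (\<forall>l\<in>G. gc l a \<noteq> 0 \<longrightarrow> P l)"

lemma spt_expand: "spt P a \<Longrightarrow> a = (\<Sum>l\<in>{l\<in>G. P l}. gc l a)"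
proof -
  assume a: "spt P a"
  have "(\<Sum>l\<in>G. gc l a) = (\<Sum>l\<in>{l\<in>G. P l}. gc l a)"
    by (rule sum.mono_neutral_right[OF fin]) (use a in \<open>auto simp: spt_def\<close>)
  then show ?thesis using gc_sum[of a] by simp
qed

lemma spt_zero[simp]: "spt P 0" unfolding spt_def by simp
lemma spt_add: "spt P a \<Longrightarrow> spt P b \<Longrightarrow> spt P (a + b)" unfolding spt_def gc_add by auto
lemma spt_sum: "(\<And>i. i \<in> I \<Longrightarrow> spt P (f i)) \<Longrightarrow> spt P (sum f I)"
  by (induct I rule: infinite_finite_induct) (auto simp: spt_add)
lemma spt_gc: "spt P b \<Longrightarrow> spt P (gc l0 b)"
  unfolding spt_def
proof (intro ballI impI)
  fix l assume b: "\<forall>l\<in>G. gc l b \<noteq> 0 \<longrightarrow> P l" and l: "l \<in> G" "gc l (gc l0 b) \<noteq> 0"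
  show "P l"
  proof (cases "l0 \<in> G")
    case True
    then show ?thesis using gc_homog[OF True gc_in[OF True]] l b by (auto split: if_splits)
  next
    case False
    then show ?thesis using gc_out l by simp
  qed
qed

definition "isoG f l \<longleftrightarrow> l \<in> G \<and> r l = f \<and> d l = f"

lemma spt_mult_iso: assumes "spt (isoG f) a" "spt (isoG f) b" shows "spt (isoG f) (a * b)"
proof -
  have "a * b = (\<Sum>l1\<in>G. \<Sum>l2\<in>G. gc l1 a * gc l2 b)"
    by (subst gc_sum[of a], subst gc_sum[of b]) (rule sum_product)
  also have "\<dots> = (\<Sum>p\<in>G \<times> G. gc (fst p) a * gc (snd p) b)"
    by (simp add: sum.cartesian_product case_prod_beta)
  finally have ab: "a * b = \<dots>" .
  show ?thesis unfolding spt_def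
  proof (intro ballI impI)
    fix l assume l: "l \<in> G" "gc l (a * b) \<noteq> 0"
    have "gc l (a * b) = (\<Sum>p\<in>G \<times> G. if pr (fst p) (snd p) = l then gc (fst p) a * gc (snd p) b else 0)"
      unfolding ab
    proof (rule gc_sum_homog)
      show "finite (G \<times> G)" using fin by simp
      fix p assume "p \<in> G \<times> G"
      then have "fst p \<in> G" "snd p \<in> G" by auto
      then show "gc (fst p) a * gc (snd p) b = 0 \<or> (pr (fst p) (snd p) \<in> G \<and> gc (fst p) a * gc (snd p) b \<in> Ag (pr (fst p) (snd p)))"
        by (intro mult_homog gc_in)
    qed
    note eq = this
    have "\<exists>p\<in>G \<times> G. (if pr (fst p) (snd p) = l then gc (fst p) a * gc (snd p) b else 0) \<noteq> 0"
    proof (rule ccontr)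
      assume "\<not> ?thesis"
      then have "(\<Sum>p\<in>G \<times> G. if pr (fst p) (snd p) = l then gc (fst p) a * gc (snd p) b else 0) = 0"
        by (intro sum.neutral) blast
      then show False using eq l(2) by simp
    qed
    then obtain p where p: "p \<in> G \<times> G" "pr (fst p) (snd p) = l" "gc (fst p) a * gc (snd p) b \<noteq> 0"
      by (metis (full_types))
    have pG: "fst p \<in> G" "snd p \<in> G" using p(1) by auto
    have nz: "gc (fst p) a \<noteq> 0" "gc (snd p) b \<noteq> 0" using p(3) by auto
    have dr: "d (fst p) = r (snd p)" using Ag_mult0[OF pG gc_in gc_in] p(3) pG by blast
    have "isoG f (fst p)" "isoG f (snd p)" using assms pG nz unfolding spt_def by auto
    then show "isoG f l" using p pG mult dr unfolding isoG_def by auto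
  qed
qed

lemma spt_scale: "spt P a \<Longrightarrow> spt P (scale t a)"
  unfolding spt_def gc_scale using module.scale_zero_right[OF md] by auto
lemma spt_neg: "spt P a \<Longrightarrow> spt P (- a)"
  unfolding spt_def gc_neg by auto

lemma spt_right_unit: assumes "spt (\<lambda>l. d l = f) a" shows "a * on f = a"
proof -
  have "a * on f = (\<Sum>l\<in>{l\<in>G. d l = f}. gc l a * on f)"
    by (subst spt_expand[OF assms]) (rule sum_distrib_right)
  also have "\<dots> = (\<Sum>l\<in>{l\<in>G. d l = f}. gc l a)"
    by (rule sum.cong[OF refl]) (use U2 gc_in in auto)
  finally show ?thesis using spt_expand[OF assms] by simp
qed

end



context grp begin
lemma div_r: assumes "g' \<in> G" "k \<in> G" "d g' = d k"
  shows "pr g' (iv k) \<in> G \<and> d (pr g' (iv k)) = r k \<and> r (pr g' (iv k)) = r g' \<and> pr (pr g' (iv k)) k = g'"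
proof -
  have 1: "d g' = r (iv k)" using assms r_iv by simp
  have 2: "d (iv k) = r k" using assms d_iv by simp
  have m: "pr g' (iv k) \<in> G \<and> d (pr g' (iv k)) = r k \<and> r (pr g' (iv k)) = r g'"
    using mult[OF assms(1) iv_in[OF assms(2)] 1] 2 by simp
  have "pr (pr g' (iv k)) k = pr g' (pr (iv k) k)"
    using assoc[OF assms(1) iv_in[OF assms(2)] assms(2) 1] 2 by simp
  also have "\<dots> = g'" using d_def' assms unit_r by metis
  finally show ?thesis using m by simp
qed

lemma mul_r_inv: assumes "l \<in> G" "k \<in> G" "d l = r k" shows "pr (pr l k) (iv k) = l"
proof -
  have "pr (pr l k) (iv k) = pr l (pr k (iv k))"
    using assoc[OF assms(1,2) iv_in[OF assms(2)] assms(3)] r_iv[OF assms(2)] by simp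
  also have "\<dots> = l" using r_def' assms unit_r by metis
  finally show ?thesis .
qed

lemma mul_in: "l \<in> G \<Longrightarrow> k \<in> G \<Longrightarrow> d l = r k \<Longrightarrow> pr l k \<in> G" using mult by blast
end

context setting begin

abbreviation "C0 \<equiv> C0set G pr iv Ag"
abbreviation "mul \<equiv> C_mult G pr iv Ag"
abbreviation "E0 \<equiv> G0 G pr iv"

definition "U S = (\<lambda>g k. if g \<in> S \<and> k \<in> G \<and> d k = g then on (r k) else 0)"
definition "restr S c = (\<lambda>m k. if d m \<in> S then c m k else 0)"

lemma C0_iff: "c \<in> C0 \<longleftrightarrow> (\<forall>g k. c g k \<noteq> 0 \<longrightarrow> g \<in> G \<and> d g = r g \<and> k \<in> G \<and> d k = d g)
   \<and> (\<forall>g k. spt (isoG (r k)) (c g k))"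
  unfolding C0set_def spt_def isoG_def by auto

lemma spt_mono: "spt P a \<Longrightarrow> (\<And>l. l \<in> G \<Longrightarrow> P l \<Longrightarrow> Q l) \<Longrightarrow> spt Q a"
  unfolding spt_def by auto

lemma spt_expand': assumes "spt P a" "\<And>l. l \<in> G \<Longrightarrow> P l \<Longrightarrow> Q l"
  shows "a = (\<Sum>l\<in>{l\<in>G. Q l}. gc l a)"
  using spt_expand[OF spt_mono[OF assms]] .

lemma we_eq: "w_e G pr iv Ag e = U {e}"
proof (intro ext)
  fix g k
  show "w_e G pr iv Ag e g k = U {e} g k"
  proof (cases "g = e \<and> k \<in> G")
    case True
    have rk: "r k \<in> E0" using True G0_iff r_in d_r by blast
    have "(\<Sum>f\<in>E0. if r k = f \<and> d k = e then on f else 0) = (if d k = e then on (r k) else 0)"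
    proof (cases "d k = e")
      case True
      then show ?thesis using rk fin by (simp add: sum.delta G0_def)
    qed simp
    then show ?thesis using True unfolding w_e_def U_def by auto
  next
    case False
    then show ?thesis unfolding w_e_def U_def by auto
  qed
qed

lemma w_eq: "w_tot G pr iv Ag = U E0"
proof (intro ext)
  fix g k
  have "w_tot G pr iv Ag g k = (\<Sum>e\<in>E0. U {e} g k)"
    unfolding w_tot_def we_eq sum_fun_apply ..
  also have "\<dots> = U E0 g k"
  proof (cases "g \<in> E0")
    case True
    have "(\<Sum>e\<in>E0. U {e} g k) = (\<Sum>e\<in>E0. if e = g then U {g} g k else 0)"
      by (rule sum.cong[OF refl]) (auto simp: U_def)
    also have "\<dots> = U {g} g k" using True fin by (simp add: sum.delta' G0_def)
    finally show ?thesis using True by (simp add: U_def)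
  next
    case False
    have "(\<Sum>e\<in>E0. U {e} g k) = 0"
      by (rule sum.neutral) (use False in \<open>auto simp: U_def\<close>)
    then show ?thesis using False by (simp add: U_def)
  qed
  finally show "w_tot G pr iv Ag g k = U E0 g k" .
qed

lemma U_C0: assumes "S \<subseteq> E0" shows "U S \<in> C0"
proof -
  have A: "\<forall>g k. U S g k \<noteq> 0 \<longrightarrow> g \<in> G \<and> d g = r g \<and> k \<in> G \<and> d k = d g"
  proof (intro allI impI)
    fix g k assume "U S g k \<noteq> 0"
    then have "g \<in> S" "k \<in> G" "d k = g" unfolding U_def by (auto split: if_splits)
    then show "g \<in> G \<and> d g = r g \<and> k \<in> G \<and> d k = d g" using assms G0_iff G0_r by auto
  qed
  have B: "\<forall>g k. spt (isoG (r k)) (U S g k)"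
  proof (intro allI)
    fix g k
    show "spt (isoG (r k)) (U S g k)"
    proof (cases "g \<in> S \<and> k \<in> G \<and> d k = g")
      case True
      have rk: "r k \<in> G" using True r_in by blast
      show ?thesis using True unfolding U_def spt_def isoG_def
        using gc_homog[OF rk on_in[OF rk]] rk d_r r_r True by auto
    next
      case False
      then have "U S g k = 0" unfolding U_def by auto
      then show ?thesis by simp
    qed
  qed
  show ?thesis unfolding C0_iff using A B by blast
qed

definition "Pairs m = {(g, h). g \<in> G \<and> h \<in> G \<and> d g = r h \<and> pr g h = m}"

lemma Pairs_fin: "finite (Pairs m)"
  by (rule finite_subset[of _ "G \<times> G"]) (auto simp: Pairs_def fin)

lemma mul_apply: "mul x y m k = (\<Sum>p\<in>Pairs m. B_mult G pr iv Ag (x (fst p)) (beta G pr iv (fst p) (y (snd p))) k)"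
  unfolding C_mult_def Pairs_def sum_fun_apply by (simp add: case_prod_beta)

lemma B_mult_apply: "B_mult G pr iv Ag x y k = (if k \<in> G then
      (\<Sum>g\<in>{g\<in>G. d g = d k}. x g * gc (pr g (iv k)) (y k)) else 0)"
  unfolding B_mult_def by simp

lemma B0l: "B_mult G pr iv Ag (\<lambda>k. 0) y = (\<lambda>k. 0)" unfolding B_mult_def by (auto simp: fun_eq_iff)
lemma B0r: "B_mult G pr iv Ag x (\<lambda>k. 0) = (\<lambda>k. 0)" unfolding B_mult_def by (auto simp: fun_eq_iff)
lemma beta0: "beta G pr iv g (\<lambda>k. 0) = (\<lambda>k. 0)" unfolding beta_def by simp

end



context setting begin

lemma Pairs_single:
  assumes "\<And>p. p \<in> Pairs m \<Longrightarrow> p \<noteq> a \<Longrightarrow> f p = 0"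
  shows "(\<Sum>p\<in>Pairs m. f p) = (if a \<in> Pairs m then f a else 0)"
  by (rule sum_single[OF Pairs_fin]) (use assms in blast)

lemma C0_nz: "c \<in> C0 \<Longrightarrow> c g k \<noteq> 0 \<Longrightarrow> g \<in> G \<and> d g = r g \<and> k \<in> G \<and> d k = d g"
  unfolding C0_iff by blast
lemma C0_spt: "c \<in> C0 \<Longrightarrow> spt (isoG (r k)) (c g k)"
  unfolding C0_iff by blast

lemma mulL: assumes S: "S \<subseteq> E0" and c: "c \<in> C0" shows "mul (U S) c = restr S c"
proof (intro ext)
  fix m k
  have US0: "g \<notin> S \<Longrightarrow> U S g = (\<lambda>k. 0)" for g unfolding U_def by auto
  have "mul (U S) c m k = (if (r m, m) \<in> Pairs m then
      B_mult G pr iv Ag (U S (r m)) (beta G pr iv (r m) (c m)) k else 0)"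
    unfolding mul_apply
  proof (subst Pairs_single[where a="(r m, m)"])
    fix p assume p: "p \<in> Pairs m" "p \<noteq> (r m, m)"
    obtain g h where gh: "p = (g, h)" by (cases p)
    show "B_mult G pr iv Ag (U S (fst p)) (beta G pr iv (fst p) (c (snd p))) k = 0"
    proof (cases "g \<in> S")
      case True
      then have "g \<in> G" "d g = g" using S G0_iff by auto
      moreover have "h \<in> G" "d g = r h" "pr g h = m" using p gh unfolding Pairs_def by auto
      ultimately have "h = m" "g = r m" using unit_l by auto
      then show ?thesis using p gh by simp
    next
      case False
      then show ?thesis using gh US0 B0l by simp
    qed
  qed simp
  also have "\<dots> = restr S c m k"
  proof (cases "m \<in> G")
    case False
    then have "c m k = 0" using C0_nz[OF c] by blast
    then show ?thesis using False unfolding Pairs_def restr_def by auto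
  next
    case mG: True
    have inP: "(r m, m) \<in> Pairs m" unfolding Pairs_def using mG r_in d_r unit_l by auto
    have beta_eq: "beta G pr iv (r m) (c m) = c m"
    proof (intro ext)
      fix k'
      show "beta G pr iv (r m) (c m) k' = c m k'"
      proof (cases "k' \<in> G \<and> d k' = r (r m)")
        case True
        then have "pr k' (r m) = k'" using r_r[OF mG] unit_r by metis
        then show ?thesis using True unfolding beta_def by simp
      next
        case False
        then have "c m k' = 0" using C0_nz[OF c, of m k'] r_r[OF mG] by (cases "c m k' = 0") auto
        then show ?thesis using False unfolding beta_def by auto
      qed
    qed
    show ?thesis
    proof (cases "c m k = 0")
      case True
      then show ?thesis using inP beta_eq unfolding B_mult_apply restr_def by simp
    next
      case False
      note nz = C0_nz[OF c False]
      define a where "a = c m k"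
      have spa: "spt (isoG (r k)) a" using C0_spt[OF c] a_def by blast
      show ?thesis
      proof (cases "r m \<in> S")
        case False
        then have "U S (r m) = (\<lambda>k. 0)" using US0 by blast
        then show ?thesis using inP beta_eq nz False unfolding restr_def by (simp add: B0l)
      next
        case True
        have "B_mult G pr iv Ag (U S (r m)) (c m) k
            = (\<Sum>g'\<in>{g'\<in>G. d g' = d k}. on (r g') * gc (pr g' (iv k)) a)"
          unfolding B_mult_apply a_def using nz True
          by (simp, intro sum.cong refl) (auto simp: U_def)
        also have "\<dots> = (\<Sum>l\<in>{l\<in>G. d l = r k}. on (r l) * gc l a)"
        proof (rule sum.reindex_bij_witness[where i="\<lambda>l. pr l k" and j="\<lambda>g'. pr g' (iv k)"])
          fix g' assume "g' \<in> {g'\<in>G. d g' = d k}"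
          then have g': "g' \<in> G" "d g' = d k" by auto
          note dv = div_r[OF g'(1) _ g'(2)]
          show "pr (pr g' (iv k)) k = g'" using dv nz by blast
          show "pr g' (iv k) \<in> {l\<in>G. d l = r k}" using dv nz by blast
          show "on (r (pr g' (iv k))) * gc (pr g' (iv k)) a = on (r g') * gc (pr g' (iv k)) a"
            using dv nz by metis
        next
          fix l assume "l \<in> {l\<in>G. d l = r k}"
          then have l: "l \<in> G" "d l = r k" by auto
          show "pr (pr l k) (iv k) = l" using mul_r_inv l nz by blast
          show "pr l k \<in> {g'\<in>G. d g' = d k}" using mult[OF l(1) _ l(2)] nz by blast
        qed
        also have "\<dots> = (\<Sum>l\<in>{l\<in>G. d l = r k}. gc l a)"
          by (rule sum.cong[OF refl]) (use U1 gc_in in auto)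
        also have "\<dots> = a"
          using spt_expand'[OF spa, of "\<lambda>l. d l = r k"] unfolding isoG_def by simp
        finally show ?thesis using inP beta_eq nz True unfolding restr_def a_def by simp
      qed
    qed
  qed
  finally show "mul (U S) c m k = restr S c m k" .
qed


lemma mulR: assumes S: "S \<subseteq> E0" and c: "c \<in> C0" shows "mul c (U S) = restr S c"
proof (intro ext)
  fix m k
  have US0: "h \<notin> S \<Longrightarrow> U S h = (\<lambda>k. 0)" for h unfolding U_def by auto
  have "mul c (U S) m k = (if (m, d m) \<in> Pairs m then
      B_mult G pr iv Ag (c m) (beta G pr iv m (U S (d m))) k else 0)"
    unfolding mul_apply
  proof (subst Pairs_single[where a="(m, d m)"])
    fix p assume p: "p \<in> Pairs m" "p \<noteq> (m, d m)"
    obtain g h where gh: "p = (g, h)" by (cases p)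
    show "B_mult G pr iv Ag (c (fst p)) (beta G pr iv (fst p) (U S (snd p))) k = 0"
    proof (cases "h \<in> S")
      case True
      then have "h \<in> G" "d h = h" "r h = h" using S G0_iff G0_r by auto
      moreover have "g \<in> G" "d g = r h" "pr g h = m" using p gh unfolding Pairs_def by auto
      ultimately have "g = m" "h = d m" using unit_r by auto
      then show ?thesis using p gh by simp
    next
      case False
      then show ?thesis using gh US0[OF False] unfolding beta_def B_mult_def by simp
    qed
  qed simp
  also have "\<dots> = restr S c m k"
  proof (cases "m \<in> G")
    case False
    then have "c m k = 0" using C0_nz[OF c] by blast
    then show ?thesis using False unfolding Pairs_def restr_def by auto
  next
    case mG: True
    have inP: "(m, d m) \<in> Pairs m" unfolding Pairs_def using mG d_in r_d unit_r by auto
    define y where "y = beta G pr iv m (U S (d m))"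
    have y: "y k' = (if k' \<in> G \<and> d k' = r m \<and> d m \<in> S then on (r k') else 0)" for k'
    proof (cases "k' \<in> G \<and> d k' = r m")
      case True
      then have "pr k' m \<in> G \<and> d (pr k' m) = d m \<and> r (pr k' m) = r k'" using mult mG by blast
      then show ?thesis using True unfolding y_def beta_def U_def by auto
    next
      case False
      then show ?thesis unfolding y_def beta_def by auto
    qed
    show ?thesis
    proof (cases "k \<in> G \<and> d k = r m \<and> d m \<in> S")
      case False
      have "c m k = 0 \<or> d m \<notin> S"
        using False C0_nz[OF c, of m k] by (cases "c m k = 0") auto
      moreover have "B_mult G pr iv Ag (c m) y k = 0"
        unfolding B_mult_apply y using False by auto
      ultimately show ?thesis using inP unfolding restr_def y_def by auto
    next
      case True
      have rk: "r k \<in> G" using True r_in by blast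
      have "B_mult G pr iv Ag (c m) y k = (\<Sum>g'\<in>{g'\<in>G. d g' = d k}. c m g' * gc (pr g' (iv k)) (on (r k)))"
        unfolding B_mult_apply y using True by simp
      also have "\<dots> = (\<Sum>g'\<in>{g'\<in>G. d g' = d k}. if g' = k then c m k * on (r k) else 0)"
      proof (rule sum.cong[OF refl])
        fix g' assume "g' \<in> {g'\<in>G. d g' = d k}"
        then have g': "g' \<in> G" "d g' = d k" by auto
        have "pr g' (iv k) = r k \<longleftrightarrow> g' = k"
          using div_r[OF g'(1) _ g'(2)] True unit_l r_def' by metis
        then show "c m g' * gc (pr g' (iv k)) (on (r k)) = (if g' = k then c m k * on (r k) else 0)"
          using gc_homog[OF rk on_in[OF rk]] by auto
      qed
      also have "\<dots> = c m k * on (r k)" using True fin by (simp add: sum.delta')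
      also have "\<dots> = c m k"
        by (rule spt_right_unit, rule spt_mono[OF C0_spt[OF c]]) (auto simp: isoG_def)
      finally show ?thesis using inP True unfolding restr_def y_def by simp
    qed
  qed
  finally show "mul c (U S) m k = restr S c m k" .
qed

end



context setting begin

lemma mul_nz: assumes "mul x y m k \<noteq> 0"
  shows "\<exists>g h g'. g \<in> G \<and> h \<in> G \<and> d g = r h \<and> pr g h = m \<and> x g g' \<noteq> 0 \<and> k \<in> G \<and> d k = r g
     \<and> y h (pr k g) \<noteq> 0"
proof -
  obtain p where p: "p \<in> Pairs m" "B_mult G pr iv Ag (x (fst p)) (beta G pr iv (fst p) (y (snd p))) k \<noteq> 0"
    using assms unfolding mul_apply by (meson sum.neutral)
  obtain g h where gh: "p = (g, h)" by (cases p)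
  have ghP: "g \<in> G" "h \<in> G" "d g = r h" "pr g h = m" using p(1) gh unfolding Pairs_def by auto
  have kG: "k \<in> G" using p(2) unfolding B_mult_apply by (auto split: if_splits)
  obtain g' where g': "x g g' * gc (pr g' (iv k)) (beta G pr iv g (y h) k) \<noteq> 0"
    using p(2) kG gh unfolding B_mult_apply by (auto intro: sum.neutral)
  have "x g g' \<noteq> 0" using g' by auto
  moreover have "beta G pr iv g (y h) k \<noteq> 0" using g' by auto
  then have "d k = r g" "y h (pr k g) \<noteq> 0" unfolding beta_def by (auto split: if_splits)
  ultimately show ?thesis using ghP kG by blast
qed

lemma term_spt: assumes x: "x \<in> C0" and y: "y \<in> C0" and k: "k \<in> G" and g': "g' \<in> G" "d g' = d k"
  shows "spt (isoG (r k)) (x g g' * gc (pr g' (iv k)) (beta G pr iv g (y h) k))"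
proof (cases "x g g' = 0 \<or> gc (pr g' (iv k)) (beta G pr iv g (y h) k) = 0")
  case True
  then show ?thesis by auto
next
  case False
  define l0 where "l0 = pr g' (iv k)"
  define b where "b = beta G pr iv g (y h) k"
  have nz: "x g g' \<noteq> 0" "gc l0 b \<noteq> 0" using False l0_def b_def by auto
  then have "b \<noteq> 0" by auto
  then have dk: "d k = r g" and bb: "b = y h (pr k g)" unfolding b_def beta_def by (auto split: if_splits)
  have gG: "g \<in> G" using C0_nz[OF x nz(1)] by blast
  have "r (pr k g) = r k" using mult[OF k gG dk] by blast
  then have spb: "spt (isoG (r k)) b" using C0_spt[OF y] bb by metis
  have sp0: "spt (isoG (r k)) (gc l0 b)" using spt_gc[OF spb] .
  note dv = div_r[OF g'(1) k g'(2)]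
  have "gc l0 (gc l0 b) = gc l0 b" using gc_homog[OF _ gc_in] dv l0_def by simp
  then have "isoG (r k) l0" using sp0 nz(2) dv l0_def unfolding spt_def by auto
  then have "r g' = r k" using dv l0_def unfolding isoG_def by auto
  then have "spt (isoG (r k)) (x g g')" using C0_spt[OF x] by metis
  then show ?thesis using spt_mult_iso sp0 l0_def b_def by simp
qed

lemma mul_C0: assumes x: "x \<in> C0" and y: "y \<in> C0" shows "mul x y \<in> C0"
proof -
  have A: "\<forall>m k. mul x y m k \<noteq> 0 \<longrightarrow> m \<in> G \<and> d m = r m \<and> k \<in> G \<and> d k = d m"
  proof (intro allI impI)
    fix m k assume "mul x y m k \<noteq> 0"
    then obtain g h g' where gh: "g \<in> G" "h \<in> G" "d g = r h" "pr g h = m" "x g g' \<noteq> 0" "k \<in> G" "d k = r g"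
       "y h (pr k g) \<noteq> 0" using mul_nz by blast
    have 1: "d g = r g" using C0_nz[OF x gh(5)] by blast
    have 2: "d h = r h" using C0_nz[OF y gh(8)] by blast
    have "m \<in> G" "d m = d h" "r m = r g" using mult[OF gh(1-3)] gh(4) by auto
    then show "m \<in> G \<and> d m = r m \<and> k \<in> G \<and> d k = d m" using 1 2 gh by auto
  qed
  have B: "\<forall>m k. spt (isoG (r k)) (mul x y m k)"
  proof (intro allI)
    fix m k
    show "spt (isoG (r k)) (mul x y m k)"
      unfolding mul_apply
    proof (rule spt_sum)
      fix p assume "p \<in> Pairs m"
      show "spt (isoG (r k)) (B_mult G pr iv Ag (x (fst p)) (beta G pr iv (fst p) (y (snd p))) k)"
        unfolding B_mult_apply
        using term_spt[OF x y] by (auto intro!: spt_sum)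
    qed
  qed
  show ?thesis unfolding C0_iff using A B by blast
qed

end



context setting begin

abbreviation "we \<equiv> w_e G pr iv Ag"
abbreviation "Cex \<equiv> Ce_explicit G pr iv Ag"

lemma C0_Cset: "C0 \<subseteq> Cset G pr iv"
  unfolding Cset_def using C0_nz by fastforce

lemma zero_C0: "0 \<in> C0" unfolding C0_iff by simp

lemma add_C0: "x \<in> C0 \<Longrightarrow> y \<in> C0 \<Longrightarrow> x + y \<in> C0"
  unfolding C0_iff by (auto intro: spt_add) (metis add.right_neutral)+

lemma neg_C0: "x \<in> C0 \<Longrightarrow> - x \<in> C0"
  unfolding C0_iff by (auto intro: spt_neg)

lemma scale_C0: "x \<in> C0 \<Longrightarrow> C_scale scale t x \<in> C0"
  unfolding C0_iff C_scale_def using module.scale_zero_right[OF md]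
  by (auto intro: spt_scale) metis+

lemma restr_C0: "c \<in> C0 \<Longrightarrow> restr S c \<in> C0"
  unfolding C0_iff restr_def by auto

lemma restr_all: "c \<in> C0 \<Longrightarrow> restr E0 c = c"
  unfolding restr_def using C0_nz G0_iff d_in d_d by (fastforce simp: fun_eq_iff)

lemma restr_U: "T \<subseteq> E0 \<Longrightarrow> restr S (U T) = U (S \<inter> T)"
  unfolding restr_def U_def using G0_iff by (fastforce simp: fun_eq_iff)

lemma Cex_iff: "c \<in> Cex e \<longleftrightarrow> c \<in> C0 \<and> (\<forall>g k. c g k \<noteq> 0 \<longrightarrow> d g = e)"
proof
  assume "c \<in> Cex e"
  then have AB: "(\<forall>g k. c g k \<noteq> 0 \<longrightarrow> g \<in> G \<and> d g = e \<and> r g = e \<and> k \<in> G \<and> d k = e) \<and> (\<forall>g k l. l \<in> G \<and> gc l (c g k) \<noteq> 0 \<longrightarrow> r l = d l \<and> d l = r k)"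
    by (simp only: Ce_explicit_def mem_Collect_eq)
  have A: "\<forall>g k. c g k \<noteq> 0 \<longrightarrow> g \<in> G \<and> d g = e \<and> r g = e \<and> k \<in> G \<and> d k = e"
    and B: "\<forall>g k l. l \<in> G \<and> gc l (c g k) \<noteq> 0 \<longrightarrow> r l = d l \<and> d l = r k"
    using conjunct1[OF AB] conjunct2[OF AB] by this+
  have "c \<in> C0" unfolding C0set_def using B by (simp add: A)
  then show "c \<in> C0 \<and> (\<forall>g k. c g k \<noteq> 0 \<longrightarrow> d g = e)" using A by simp
next
  assume H: "c \<in> C0 \<and> (\<forall>g k. c g k \<noteq> 0 \<longrightarrow> d g = e)"
  from conjunct1[OF H] have AB: "(\<forall>g k. c g k \<noteq> 0 \<longrightarrow> g \<in> G \<and> d g = r g \<and> k \<in> G \<and> d k = d g) \<and> (\<forall>g k l. l \<in> G \<and> gc l (c g k) \<noteq> 0 \<longrightarrow> r l = d l \<and> d l = r k)"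
    by (simp only: C0set_def mem_Collect_eq)
  have A: "\<forall>g k. c g k \<noteq> 0 \<longrightarrow> g \<in> G \<and> d g = r g \<and> k \<in> G \<and> d k = d g"
    and B: "\<forall>g k l. l \<in> G \<and> gc l (c g k) \<noteq> 0 \<longrightarrow> r l = d l \<and> d l = r k"
    and C: "\<forall>g k. c g k \<noteq> 0 \<longrightarrow> d g = e"
    using conjunct1[OF AB] conjunct2[OF AB] conjunct2[OF H] by this+
  have "\<forall>g k. c g k \<noteq> 0 \<longrightarrow> g \<in> G \<and> d g = e \<and> r g = e \<and> k \<in> G \<and> d k = e"
    using A C by metis
  then show "c \<in> Cex e" unfolding Ce_explicit_def using B by simp
qed

lemma restr_sum: assumes "c \<in> C0" shows "(\<Sum>e\<in>E0. restr {e} c) = c"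
proof (intro ext)
  fix g k
  have "(\<Sum>e\<in>E0. restr {e} c) g k = (\<Sum>e\<in>E0. if e = d g then c g k else 0)"
    unfolding sum_fun_apply restr_def by (intro sum.cong) auto
  also have "\<dots> = c g k"
    using C0_nz[OF assms, of g k] fin G0_iff d_in d_d by (auto simp: sum.delta' G0_def)
  finally show "(\<Sum>e\<in>E0. restr {e} c) g k = c g k" .
qed

end



context setting begin

lemma U_empty: "U {} = 0" unfolding U_def by (simp add: fun_eq_iff)

lemma Ce_eq: "e \<in> E0 \<Longrightarrow> Ce G pr iv Ag e = Cex e"
proof -
  assume e: "e \<in> E0"
  have "Ce G pr iv Ag e = restr {e} ` C0"
    unfolding Ce_def we_eq using mulR[of "{e}"] e by (intro image_cong refl) auto
  also have "\<dots> = Cex e"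
  proof
    show "restr {e} ` C0 \<subseteq> Cex e"
    proof
      fix c' assume "c' \<in> restr {e} ` C0"
      then obtain c where c: "c \<in> C0" "c' = restr {e} c" by blast
      have "restr {e} c \<in> C0" by (rule restr_C0[OF c(1)])
      moreover have "\<forall>g k. restr {e} c g k \<noteq> 0 \<longrightarrow> d g = e" by (simp add: restr_def)
      ultimately show "c' \<in> Cex e" unfolding Cex_iff c(2) by blast
    qed
    show "Cex e \<subseteq> restr {e} ` C0"
    proof
      fix c assume "c \<in> Cex e"
      then have "c \<in> C0" "restr {e} c = c" unfolding Cex_iff restr_def by (auto simp: fun_eq_iff)
      then show "c \<in> restr {e} ` C0" by (metis image_eqI)
    qed
  qed
  finally show ?thesis .
qed

lemma main:
  "(C0 \<subseteq> Cset G pr iv \<and> 0 \<in> C0 \<and>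
      (\<forall>x\<in>C0. \<forall>y\<in>C0. x + y \<in> C0 \<and> mul x y \<in> C0) \<and>
      (\<forall>x\<in>C0. - x \<in> C0) \<and>
      (\<forall>t. \<forall>x\<in>C0. C_scale scale t x \<in> C0) \<and>
      w_tot G pr iv Ag \<in> C0 \<and> (\<forall>x\<in>C0. mul (w_tot G pr iv Ag) x = x \<and> mul x (w_tot G pr iv Ag) = x))
   \<and> ((\<forall>e\<in>E0. we e \<in> C0 \<and> mul (we e) (we e) = we e \<and>
         (\<forall>x\<in>C0. mul (we e) x = mul x (we e))) \<and>
      (\<forall>e\<in>E0. \<forall>e'\<in>E0. e \<noteq> e' \<longrightarrow> mul (we e) (we e') = 0) \<and>
      (\<Sum>e\<in>E0. we e) = w_tot G pr iv Ag)
   \<and> ((\<forall>e\<in>E0. Ce G pr iv Ag e = Ce_explicit G pr iv Ag e \<and>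
         Ce G pr iv Ag e \<subseteq> C0 \<and>
         0 \<in> Ce G pr iv Ag e \<and>
         (\<forall>x\<in>Ce G pr iv Ag e. \<forall>y\<in>Ce G pr iv Ag e. x + y \<in> Ce G pr iv Ag e) \<and>
         (\<forall>t. \<forall>x\<in>Ce G pr iv Ag e. C_scale scale t x \<in> Ce G pr iv Ag e) \<and>
         (\<forall>x\<in>C0. \<forall>y\<in>Ce G pr iv Ag e. mul x y \<in> Ce G pr iv Ag e \<and> mul y x \<in> Ce G pr iv Ag e) \<and>
         (\<forall>y\<in>Ce G pr iv Ag e. mul (we e) y = y \<and> mul y (we e) = y)) \<and>
      (\<forall>x\<in>C0. x = (\<Sum>e\<in>E0. mul x (we e))) \<and>
      (\<forall>f. (\<forall>e\<in>E0. f e \<in> Ce G pr iv Ag e) \<and> (\<Sum>e\<in>E0. f e) = 0 \<longrightarrow> (\<forall>e\<in>E0. f e = 0)))"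
proof (intro conjI)
  show "C0 \<subseteq> Cset G pr iv" by (rule C0_Cset)
  show "0 \<in> C0" by (rule zero_C0)
  show "\<forall>x\<in>C0. \<forall>y\<in>C0. x + y \<in> C0 \<and> mul x y \<in> C0" using add_C0 mul_C0 by blast
  show "\<forall>x\<in>C0. - x \<in> C0" using neg_C0 by blast
  show "\<forall>t. \<forall>x\<in>C0. C_scale scale t x \<in> C0" using scale_C0 by blast
  show "w_tot G pr iv Ag \<in> C0" unfolding w_eq by (rule U_C0) simp
  show "\<forall>x\<in>C0. mul (w_tot G pr iv Ag) x = x \<and> mul x (w_tot G pr iv Ag) = x"
    unfolding w_eq using mulL[of E0] mulR[of E0] restr_all by simp
  show "\<forall>e\<in>E0. we e \<in> C0 \<and> mul (we e) (we e) = we e \<and> (\<forall>x\<in>C0. mul (we e) x = mul x (we e))"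
  proof
    fix e assume e: "e \<in> E0"
    have 1: "we e \<in> C0" unfolding we_eq using U_C0 e by simp
    have 2: "mul (we e) (we e) = we e"
      using mulL[of "{e}", OF _ 1] e restr_U[of "{e}" "{e}"] unfolding we_eq by simp
    have 3: "\<forall>x\<in>C0. mul (we e) x = mul x (we e)"
      unfolding we_eq using mulL[of "{e}"] mulR[of "{e}"] e by simp
    show "we e \<in> C0 \<and> mul (we e) (we e) = we e \<and> (\<forall>x\<in>C0. mul (we e) x = mul x (we e))"
      using 1 2 3 by blast
  qed
  show "\<forall>e\<in>E0. \<forall>e'\<in>E0. e \<noteq> e' \<longrightarrow> mul (we e) (we e') = 0"
  proof (intro ballI impI)
    fix e e' assume e: "e \<in> E0" "e' \<in> E0" "e \<noteq> e'"
    have "we e' \<in> C0" unfolding we_eq using U_C0 e by simp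
    then show "mul (we e) (we e') = 0"
      using mulL[of "{e}"] e restr_U[of "{e'}" "{e}"] U_empty unfolding we_eq by simp
  qed
  show "(\<Sum>e\<in>E0. we e) = w_tot G pr iv Ag" unfolding w_tot_def ..
  show "\<forall>e\<in>E0. Ce G pr iv Ag e = Ce_explicit G pr iv Ag e \<and>
         Ce G pr iv Ag e \<subseteq> C0 \<and>
         0 \<in> Ce G pr iv Ag e \<and>
         (\<forall>x\<in>Ce G pr iv Ag e. \<forall>y\<in>Ce G pr iv Ag e. x + y \<in> Ce G pr iv Ag e) \<and>
         (\<forall>t. \<forall>x\<in>Ce G pr iv Ag e. C_scale scale t x \<in> Ce G pr iv Ag e) \<and>
         (\<forall>x\<in>C0. \<forall>y\<in>Ce G pr iv Ag e. mul x y \<in> Ce G pr iv Ag e \<and> mul y x \<in> Ce G pr iv Ag e) \<and>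
         (\<forall>y\<in>Ce G pr iv Ag e. mul (we e) y = y \<and> mul y (we e) = y)"
  proof
    fix e assume e: "e \<in> E0"
    note ce = Ce_eq[OF e]
    have a: "Cex e \<subseteq> C0" using Cex_iff by blast
    have b: "0 \<in> Cex e" using Cex_iff zero_C0 by simp
    have c: "\<forall>x\<in>Cex e. \<forall>y\<in>Cex e. x + y \<in> Cex e"
    proof (intro ballI)
      fix x y assume x: "x \<in> Cex e" and y: "y \<in> Cex e"
      have "x \<in> C0" "y \<in> C0" "\<forall>g k. x g k \<noteq> 0 \<longrightarrow> d g = e" "\<forall>g k. y g k \<noteq> 0 \<longrightarrow> d g = e"
        using x y unfolding Cex_iff by auto
      then show "x + y \<in> Cex e" unfolding Cex_iff using add_C0
        by (metis add.right_neutral plus_fun_apply)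
    qed
    have dd: "\<forall>t. \<forall>x\<in>Cex e. C_scale scale t x \<in> Cex e"
    proof (intro allI ballI)
      fix t x assume x: "x \<in> Cex e"
      have "x \<in> C0" "\<forall>g k. x g k \<noteq> 0 \<longrightarrow> d g = e"
        using x unfolding Cex_iff by auto
      then show "C_scale scale t x \<in> Cex e" unfolding Cex_iff using scale_C0
          module.scale_zero_right[OF md]
        by (metis C_scale_def)
    qed
    have f: "\<forall>x\<in>C0. \<forall>y\<in>Cex e. mul x y \<in> Cex e \<and> mul y x \<in> Cex e"
    proof (intro ballI conjI)
      fix x y assume x: "x \<in> C0" and y: "y \<in> Cex e"
      have yC: "y \<in> C0" and ye: "\<And>g k. y g k \<noteq> 0 \<Longrightarrow> d g = e" using y Cex_iff by auto
      show "mul x y \<in> Cex e" unfolding Cex_iff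
      proof (intro conjI allI impI)
        show "mul x y \<in> C0" using mul_C0 x yC by blast
        fix m k assume "mul x y m k \<noteq> 0"
        then obtain g h g' where gh: "g \<in> G" "h \<in> G" "d g = r h" "pr g h = m" "y h (pr k g) \<noteq> 0"
          using mul_nz by blast
        then show "d m = e" using mult[OF gh(1-3)] ye by metis
      qed
      show "mul y x \<in> Cex e" unfolding Cex_iff
      proof (intro conjI allI impI)
        show "mul y x \<in> C0" using mul_C0 x yC by blast
        fix m k assume "mul y x m k \<noteq> 0"
        then obtain g h g' where gh: "g \<in> G" "h \<in> G" "d g = r h" "pr g h = m" "y g g' \<noteq> 0"
          "x h (pr k g) \<noteq> 0"
          using mul_nz by blast
        have "d h = r h" using C0_nz[OF x gh(6)] by blast
        then show "d m = e" using mult[OF gh(1-3)] ye[OF gh(5)] gh by metis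
      qed
    qed
    have g: "\<forall>y\<in>Cex e. mul (we e) y = y \<and> mul y (we e) = y"
    proof
      fix y assume y: "y \<in> Cex e"
      have yC: "y \<in> C0" and ye: "\<And>g k. y g k \<noteq> 0 \<Longrightarrow> d g = e" using y Cex_iff by auto
      have "restr {e} y = y" unfolding restr_def using ye by (auto simp: fun_eq_iff)
      then show "mul (we e) y = y \<and> mul y (we e) = y"
        unfolding we_eq using mulL[of "{e}" y] mulR[of "{e}" y] e yC by simp
    qed
    show "Ce G pr iv Ag e = Ce_explicit G pr iv Ag e \<and>
         Ce G pr iv Ag e \<subseteq> C0 \<and>
         0 \<in> Ce G pr iv Ag e \<and>
         (\<forall>x\<in>Ce G pr iv Ag e. \<forall>y\<in>Ce G pr iv Ag e. x + y \<in> Ce G pr iv Ag e) \<and>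
         (\<forall>t. \<forall>x\<in>Ce G pr iv Ag e. C_scale scale t x \<in> Ce G pr iv Ag e) \<and>
         (\<forall>x\<in>C0. \<forall>y\<in>Ce G pr iv Ag e. mul x y \<in> Ce G pr iv Ag e \<and> mul y x \<in> Ce G pr iv Ag e) \<and>
         (\<forall>y\<in>Ce G pr iv Ag e. mul (we e) y = y \<and> mul y (we e) = y)"
      unfolding ce using a b c dd f g by blast
  qed
  show "\<forall>x\<in>C0. x = (\<Sum>e\<in>E0. mul x (we e))"
  proof
    fix x assume x: "x \<in> C0"
    have "(\<Sum>e\<in>E0. mul x (we e)) = (\<Sum>e\<in>E0. restr {e} x)"
      unfolding we_eq using mulR x by (intro sum.cong refl) simp
    then show "x = (\<Sum>e\<in>E0. mul x (we e))" using restr_sum[OF x] by simp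
  qed
  show "\<forall>f. (\<forall>e\<in>E0. f e \<in> Ce G pr iv Ag e) \<and> (\<Sum>e\<in>E0. f e) = 0 \<longrightarrow> (\<forall>e\<in>E0. f e = 0)"
  proof (intro allI impI ballI)
    fix f e assume H: "(\<forall>e\<in>E0. f e \<in> Ce G pr iv Ag e) \<and> (\<Sum>e\<in>E0. f e) = 0" and e: "e \<in> E0"
    have fe: "\<And>e' g k. e' \<in> E0 \<Longrightarrow> f e' g k \<noteq> 0 \<Longrightarrow> d g = e'"
      using H Ce_eq Cex_iff by blast
    show "f e = 0"
    proof (rule ccontr)
      assume "f e \<noteq> 0"
      then obtain g k where nz: "f e g k \<noteq> 0" by (auto simp: fun_eq_iff)
      have fin0: "finite E0" using fin unfolding G0_def by simp
      have "0 = (\<Sum>e'\<in>E0. f e') g k" using H by simp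
      also have "\<dots> = (\<Sum>e'\<in>E0. f e' g k)" by (simp add: sum_fun_apply)
      also have "\<dots> = f e g k + (\<Sum>e'\<in>E0 - {e}. f e' g k)" using sum.remove[OF fin0 e] by blast
      also have "(\<Sum>e'\<in>E0 - {e}. f e' g k) = 0"
        using fe[OF e nz] fe by (intro sum.neutral) force
      finally show False using nz by simp
    qed
  qed
qed

end


theorem lemma4p1:
  fixes G :: "'g set" and pr :: "'g \<Rightarrow> 'g \<Rightarrow> 'g" and iv :: "'g \<Rightarrow> 'g"
    and Ag :: "'g \<Rightarrow> 'a::ring_1 set" and scale :: "'k::comm_ring_1 \<Rightarrow> 'a \<Rightarrow> 'a"
  assumes "finite G" and "groupoid G pr iv"
    and "K_algebra scale" and "graded_algebra scale G pr iv Ag"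
  defines "C0 \<equiv> C0set G pr iv Ag" and "mul \<equiv> C_mult G pr iv Ag"
    and "w \<equiv> w_tot G pr iv Ag" and "we \<equiv> w_e G pr iv Ag"
    and "E0 \<equiv> G0 G pr iv"
  shows
    \<comment> \<open>(i) C_0 is a unital K-subalgebra of C with identity w\<close>
    "(C0 \<subseteq> Cset G pr iv \<and> 0 \<in> C0 \<and>
      (\<forall>x\<in>C0. \<forall>y\<in>C0. x + y \<in> C0 \<and> mul x y \<in> C0) \<and>
      (\<forall>x\<in>C0. - x \<in> C0) \<and>
      (\<forall>t. \<forall>x\<in>C0. C_scale scale t x \<in> C0) \<and>
      w \<in> C0 \<and> (\<forall>x\<in>C0. mul w x = x \<and> mul x w = x))
   \<and> \<comment> \<open>(ii) the w_e are central orthogonal idempotents of C_0 summing to w\<close>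
     ((\<forall>e\<in>E0. we e \<in> C0 \<and> mul (we e) (we e) = we e \<and>
         (\<forall>x\<in>C0. mul (we e) x = mul x (we e))) \<and>
      (\<forall>e\<in>E0. \<forall>e'\<in>E0. e \<noteq> e' \<longrightarrow> mul (we e) (we e') = 0) \<and>
      (\<Sum>e\<in>E0. we e) = w)
   \<and> \<comment> \<open>(iii) C_0 is the direct sum of the ideals C_e = C_0 w_e, unital with identity w_e\<close>
     ((\<forall>e\<in>E0. Ce G pr iv Ag e = Ce_explicit G pr iv Ag e \<and>
         Ce G pr iv Ag e \<subseteq> C0 \<and>
         0 \<in> Ce G pr iv Ag e \<and>
         (\<forall>x\<in>Ce G pr iv Ag e. \<forall>y\<in>Ce G pr iv Ag e. x + y \<in> Ce G pr iv Ag e) \<and>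
         (\<forall>t. \<forall>x\<in>Ce G pr iv Ag e. C_scale scale t x \<in> Ce G pr iv Ag e) \<and>
         (\<forall>x\<in>C0. \<forall>y\<in>Ce G pr iv Ag e. mul x y \<in> Ce G pr iv Ag e \<and> mul y x \<in> Ce G pr iv Ag e) \<and>
         (\<forall>y\<in>Ce G pr iv Ag e. mul (we e) y = y \<and> mul y (we e) = y)) \<and>
      (\<forall>x\<in>C0. x = (\<Sum>e\<in>E0. mul x (we e))) \<and>
      (\<forall>f. (\<forall>e\<in>E0. f e \<in> Ce G pr iv Ag e) \<and> (\<Sum>e\<in>E0. f e) = 0 \<longrightarrow> (\<forall>e\<in>E0. f e = 0)))"
proof -
  interpret setting G pr iv Ag scale
    by (unfold_locales) (use assms(1-4) in auto)
  show ?thesis unfolding assms(5-9) by (rule main)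
qed

end
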